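(* Let $l\in\{0,1,2,\dots\}$, let $\alpha,\beta,\gamma\in\mathbb{C}$ with $\mathrm{Re}\,\beta+l>-1$, such that all gamma functions and hypergeometric functions below are well-defined, and let $\rho\in\mathbb{R}\setminus\{0\}$. For $\delta\in\mathbb{C}$ and $z\neq0$ let $$f(\alpha,\beta,\gamma,\delta;z)=\sum_{\nu=0}^{\infty}\frac{z^{-\nu}\Gamma(\alpha+\gamma+\nu)}{\nu!\,\Gamma(\beta+\nu)}\,E\left(\begin{matrix}\alpha+1,&\beta+\nu\\ \delta,&\beta+1+\nu\end{matrix};z\right).$$ Then $$\int_0^{\rho}t^{\beta+l}E(\alpha;\beta;i/t)E(\alpha+\gamma;\beta;-i/t)\,dt=\rho^{\beta+l+1}\sum_{n=0}^{l+1}\frac{(-i\rho)^n\,\Gamma(\beta+l+1)}{\Gamma(\beta+n)}\binom{l+1}{n}f\left(\alpha-1,\beta+l+n+1,\gamma+n+1,\beta;\frac{i}{\rho}\right).$$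
   Context: For complex parameters $a_1,\dots,a_p$, $b_1,\dots,b_q$ with $p\le q$ and $z\in\mathbb{C}\setminus\{0\}$, the MacRobert $E$-function is $$E\left(\begin{matrix}a_1,\dots,a_p\\ b_1,\dots,b_q\end{matrix};z\right)=\frac{\prod_{j=1}^p\Gamma(a_j)}{\prod_{j=1}^q\Gamma(b_j)}\,{}_pF_q\left(\begin{matrix}a_1,\dots,a_p\\ b_1,\dots,b_q\end{matrix};-\frac1z\right),$$ where ${}_pF_q$ is the generalized hypergeometric function. In particular $E(a;b;z)=\frac{\Gamma(a)}{\Gamma(b)}\,{}_1F_1(a;b;-1/z)$. *)

theory Defs
  imports "HOL-Analysis.Analysis"
begin

definition hypergeom :: "complex list \<Rightarrow> complex list \<Rightarrow> complex \<Rightarrow> complex" where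
  "hypergeom as bs z =
     (\<Sum>k. (\<Prod>a\<leftarrow>as. pochhammer a k) / (\<Prod>b\<leftarrow>bs. pochhammer b k) * z ^ k / fact k)"

definition macrobertE :: "complex list \<Rightarrow> complex list \<Rightarrow> complex \<Rightarrow> complex" where
  "macrobertE as bs z =
     (\<Prod>a\<leftarrow>as. Gamma a) / (\<Prod>b\<leftarrow>bs. Gamma b) * hypergeom as bs (- 1 / z)"

definition fE :: "complex \<Rightarrow> complex \<Rightarrow> complex \<Rightarrow> complex \<Rightarrow> complex \<Rightarrow> complex" where
  "fE \<alpha> \<beta> \<gamma> \<delta> z =
     (\<Sum>\<nu>. (inverse z) ^ \<nu> * Gamma (\<alpha> + \<gamma> + of_nat \<nu>) / (fact \<nu> * Gamma (\<beta> + of_nat \<nu>))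
           * macrobertE [\<alpha> + 1, \<beta> + of_nat \<nu>] [\<delta>, \<beta> + 1 + of_nat \<nu>] z)"

definition has_oriented_integral :: "(real \<Rightarrow> complex) \<Rightarrow> real \<Rightarrow> real \<Rightarrow> complex \<Rightarrow> bool" where
  "has_oriented_integral g a b I =
     (if a \<le> b then (g has_integral I) {a..b} else (g has_integral (- I)) {b..a})"

end

theory Submission
  imports Defs
begin


lemma ratio_summable:
  fixes f r :: "nat \<Rightarrow> real"
  assumes f0: "\<And>k. f k \<ge> 0" and fr: "\<And>k. f (Suc k) = r k * f k" and r0: "r \<longlonglongrightarrow> 0"
  shows "summable f"
proof -
  have "eventually (\<lambda>k. dist (r k) 0 < 1/2) sequentially"
    using r0 by (rule tendstoD) simp
  then obtain N where N: "\<And>k. k \<ge> N \<Longrightarrow> \<bar>r k\<bar> < 1/2"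
    by (auto simp: eventually_sequentially)
  show ?thesis
  proof (rule summable_ratio_test[of "1/2" N])
    fix n assume "n \<ge> N"
    then have "\<bar>r n\<bar> * \<bar>f n\<bar> \<le> 1/2 * \<bar>f n\<bar>" using N[of n] by (intro mult_right_mono) auto
    then show "norm (f (Suc n)) \<le> 1/2 * norm (f n)" by (simp add: fr abs_mult)
  qed simp
qed

lemma ratio_tendsto:
  fixes p q :: complex and c :: real
  shows "(\<lambda>k. norm (p + of_nat k) * c / (norm (q + of_nat k) * (of_nat k + 1))) \<longlonglongrightarrow> 0"
proof -
  have inf: "filterlim (\<lambda>k. q + of_nat k :: complex) at_infinity sequentially"
    by (intro tendsto_add_filterlim_at_infinity[OF tendsto_const] tendsto_of_nat)
  have "(\<lambda>k. 1 + (p - q) / (q + of_nat k)) \<longlonglongrightarrow> 1 + 0"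
    by (intro tendsto_intros tendsto_divide_0[OF tendsto_const inf])
  moreover have "eventually (\<lambda>k. 1 + (p - q) / (q + of_nat k) = (p + of_nat k) / (q + of_nat k)) sequentially"
  proof -
    have "eventually (\<lambda>k. norm (q + of_nat k) \<ge> 1) sequentially"
      using filterlim_at_infinity_imp_norm_at_top[OF inf] by (simp add: filterlim_at_top)
    then show ?thesis
    proof eventually_elim
      case (elim k)
      then have "q + of_nat k \<noteq> 0" by auto
      then show ?case by (simp add: field_simps)
    qed
  qed
  ultimately have "(\<lambda>k. (p + of_nat k) / (q + of_nat k)) \<longlonglongrightarrow> 1"
    using Lim_transform_eventually by fastforce
  then have "(\<lambda>k. norm ((p + of_nat k) / (q + of_nat k)) * (c * inverse (of_nat k + 1))) \<longlonglongrightarrow> norm (1::complex) * (c * 0)"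
    using LIMSEQ_inverse_real_of_nat by (intro tendsto_intros) (simp_all add: add.commute)
  then show ?thesis by (simp add: norm_divide field_simps)
qed


lemma hyp_summable:
  fixes p q z :: complex
  shows "summable (\<lambda>k. norm (pochhammer p k / pochhammer q k * z ^ k / fact k))"
proof (rule ratio_summable)
  fix k
  show "norm (pochhammer p (Suc k) / pochhammer q (Suc k) * z ^ Suc k / fact (Suc k)) =
     norm (p + of_nat k) * norm z / (norm (q + of_nat k) * (of_nat k + 1)) *
     norm (pochhammer p k / pochhammer q k * z ^ k / fact k)"
    by (simp add: pochhammer_Suc norm_mult norm_divide norm_power norm_inverse divide_inverse ac_simps
        del: of_nat_Suc)
next
  show "(\<lambda>k. norm (p + of_nat k) * norm z / (norm (q + of_nat k) * (of_nat k + 1))) \<longlonglongrightarrow> 0"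
    by (rule ratio_tendsto)
qed simp

lemma double_diag:
  fixes f :: "nat \<Rightarrow> nat \<Rightarrow> complex" and u v :: "nat \<Rightarrow> real"
  assumes su: "summable u" and sv: "summable v" and u0: "\<And>k. u k \<ge> 0" and v0: "\<And>j. v j \<ge> 0"
    and le: "\<And>k j. norm (f k j) \<le> u k * v j"
  shows "(\<lambda>m. \<Sum>i\<le>m. f i (m - i)) sums (\<Sum>k. \<Sum>j. f k j)"
proof -
  define F where "F = (\<lambda>(k,j). f k j)"
  have vh: "(v has_sum suminf v) UNIV"
    by (rule sums_nonneg_imp_has_sum[OF summable_sums[OF sv] v0])
  have uh: "(u has_sum suminf u) UNIV"
    by (rule sums_nonneg_imp_has_sum[OF summable_sums[OF su] u0])
  have uv: "(\<lambda>(k,j). u k * v j) summable_on (Sigma UNIV (\<lambda>_. UNIV))"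
  proof (rule summable_on_SigmaI)
    fix k :: nat
    show "((\<lambda>j. case (k, j) of (k, j) \<Rightarrow> u k * v j) has_sum (u k * suminf v)) UNIV"
      using has_sum_cmult_right[OF vh, of "u k"] by simp
  next
    show "(\<lambda>k. u k * suminf v) summable_on UNIV"
      using has_sum_cmult_left[OF uh, of "suminf v"] by (auto simp: summable_on_def)
  qed (auto intro!: mult_nonneg_nonneg u0 v0)
  have "(\<lambda>x. norm (F x)) summable_on (Sigma UNIV (\<lambda>_. UNIV))"
    by (rule summable_on_comparison_test[OF uv]) (auto simp: F_def le)
  then have Fs: "F summable_on (Sigma UNIV (\<lambda>_. UNIV))"
    by (rule abs_summable_summable)
  define S where "S = infsum F (Sigma UNIV (\<lambda>_. UNIV))"
  have FS: "(F has_sum S) (Sigma UNIV (\<lambda>_. UNIV))"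
    using Fs S_def by (simp add: has_sum_infsum)
  have inner: "((\<lambda>j. F (k,j)) has_sum (\<Sum>j. f k j)) UNIV" for k
  proof -
    have sn: "summable (\<lambda>j. norm (f k j))"
      by (rule summable_comparison_test'[OF summable_mult[OF sv, of "u k"]]) (use le in auto)
    show ?thesis unfolding F_def
      using norm_summable_imp_has_sum[OF sn summable_sums[OF summable_norm_cancel[OF sn]]] by simp
  qed
  have "((\<lambda>k. \<Sum>j. f k j) has_sum S) UNIV"
    by (rule has_sum_Sigma'[OF FS]) (use inner in auto)
  then have S1: "(\<lambda>k. \<Sum>j. f k j) sums S" by (rule has_sum_imp_sums)
  define G where "G = (\<lambda>(m,i). f i (m - i))"
  have "(G has_sum S) (Sigma UNIV (\<lambda>m. {..m}))"
  proof -
    have "(F has_sum S) (Sigma UNIV (\<lambda>_. UNIV)) = (G has_sum S) (Sigma UNIV (\<lambda>m. {..m}))"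
      by (rule has_sum_reindex_bij_witness[where j = "\<lambda>(k,l). (k+l, k)" and i = "\<lambda>(m,t). (t, m - t)"])
         (auto simp: F_def G_def)
    with FS show ?thesis by simp
  qed
  then have "((\<lambda>m. \<Sum>i\<le>m. f i (m - i)) has_sum S) UNIV"
    by (rule has_sum_Sigma') (auto simp: G_def)
  then have "(\<lambda>m. \<Sum>i\<le>m. f i (m - i)) sums S" by (rule has_sum_imp_sums)
  with S1 show ?thesis by (simp add: sums_iff)
qed



lemma m1_powr: "(-1::complex) powr (w - 1) = - ((-1) powr w)"
proof -
  have "(-1::complex) powr (w - 1) = exp (w * (\<i> * pi) - \<i> * pi)"
    by (simp add: powr_def algebra_simps)
  also have "\<dots> = exp (w * (\<i> * pi)) / exp (\<i> * pi)" by (rule exp_diff)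
  also have "\<dots> = - ((-1) powr w)" by (simp add: powr_def)
  finally show ?thesis .
qed

lemma powr_neg_eq: "(u::real) < 0 \<Longrightarrow> complex_of_real u powr w = (-1) powr w * complex_of_real (-u) powr w"
  using powr_neg_real_complex[of "-u" w] by simp

lemma powr_real_deriv:
  fixes w :: complex and t :: real assumes t: "t \<noteq> 0"
  shows "((\<lambda>t. complex_of_real t powr w) has_vector_derivative (w * complex_of_real t powr (w - 1))) (at t)"
proof (cases "t > 0")
  case True
  then have "complex_of_real t \<notin> \<real>\<^sub>\<le>\<^sub>0" by (auto simp: complex_nonpos_Reals_iff)
  from has_field_derivative_powr[OF this, of w] show ?thesis
    by (rule has_vector_derivative_real_field)
next
  case False
  with t have t0: "t < 0" by simp
  have nr: "- complex_of_real t \<notin> \<real>\<^sub>\<le>\<^sub>0" using t0 by (auto simp: complex_nonpos_Reals_iff)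
  have "((\<lambda>z. (-1) powr w * (-z) powr w) has_field_derivative ((-1) powr w * (w * (- complex_of_real t) powr (w - 1) * (-1)))) (at (complex_of_real t))"
    by (intro derivative_eq_intros nr) auto
  then have "((\<lambda>u. (-1) powr w * (- complex_of_real u) powr w) has_vector_derivative ((-1) powr w * (w * (- complex_of_real t) powr (w - 1) * (-1)))) (at t)"
    by (rule has_vector_derivative_real_field)
  moreover have "(-1) powr w * (w * (- complex_of_real t) powr (w - 1) * (-1)) = w * complex_of_real t powr (w - 1)"
    using powr_neg_eq[OF t0, of "w - 1"] m1_powr[of w] by simp
  ultimately have "((\<lambda>u. (-1) powr w * (- complex_of_real u) powr w) has_vector_derivative (w * complex_of_real t powr (w - 1))) (at t)"
    by simp
  then show ?thesis
    by (rule has_vector_derivative_transform_within_open[where S = "{..<0}"]) (use t0 powr_neg_eq in auto)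
qed

lemma powr_real_isCont:
  fixes w :: complex and t :: real assumes "Re w > 0"
  shows "isCont (\<lambda>t. complex_of_real t powr w) t"
proof (cases "t = 0")
  case True
  have "((\<lambda>t. complex_of_real t powr w) \<longlongrightarrow> 0) (at 0)"
    by (rule tendsto_powr_complex_0) (use assms in \<open>auto intro!: tendsto_eq_intros\<close>)
  then show ?thesis using True by (simp add: isCont_def)
next
  case False
  then show ?thesis using powr_real_deriv[OF False] has_vector_derivative_continuous by blast
qed



lemma vand:
  fixes b :: complex
  shows "(\<Sum>n\<le>k. of_nat (L choose n) * of_nat (k choose n) * fact n * pochhammer (b + of_nat n) (k - n))
         = pochhammer (b + of_nat L) k"
proof (induction L arbitrary: b k)
  case 0
  then show ?case by (simp add: sum.atMost_shift)
next
  case (Suc L)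
  note IH = Suc.IH
  show ?case
  proof (cases k)
    case 0
    then show ?thesis by simp
  next
    case (Suc k')
    define X where "X n = of_nat (Suc k' choose n) * fact n * pochhammer (b + of_nat n) (Suc k' - n)" for n
    have "(\<Sum>n\<le>Suc k'. of_nat (Suc L choose n) * X n)
        = X 0 + (\<Sum>n\<le>k'. of_nat (Suc L choose Suc n) * X (Suc n))"
      by (subst sum.atMost_Suc_shift) simp
    also have "\<dots> = X 0 + (\<Sum>n\<le>k'. of_nat (L choose Suc n) * X (Suc n)) + (\<Sum>n\<le>k'. of_nat (L choose n) * X (Suc n))"
      by (simp add: sum.distrib algebra_simps)
    also have "X 0 + (\<Sum>n\<le>k'. of_nat (L choose Suc n) * X (Suc n)) = (\<Sum>n\<le>Suc k'. of_nat (L choose n) * X n)"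
      by (subst sum.atMost_Suc_shift) simp
    also have "\<dots> = pochhammer (b + of_nat L) (Suc k')"
      using IH[where b=b and k="Suc k'"] by (simp add: X_def mult.assoc)
    also have "(\<Sum>n\<le>k'. of_nat (L choose n) * X (Suc n))
       = of_nat (Suc k') * (\<Sum>n\<le>k'. of_nat (L choose n) * of_nat (k' choose n) * fact n * pochhammer ((b + 1) + of_nat n) (k' - n))"
    proof -
      have fe: "of_nat (Suc k' choose Suc n) * fact (Suc n) = (of_nat (Suc k') * of_nat (k' choose n) * fact n :: complex)" for n
      proof -
        have "(Suc k' choose Suc n) * Suc n = Suc k' * (k' choose n)"
          using Suc_times_binomial_eq[of k' n] by simp
        then have e: "(of_nat (Suc k' choose Suc n) :: complex) * of_nat (Suc n) = of_nat (Suc k') * of_nat (k' choose n)"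
          by (metis of_nat_mult)
        show ?thesis by (simp only: fact_Suc mult.assoc[symmetric] e)
      qed
      then have h: "of_nat (L choose n) * X (Suc n) = of_nat (Suc k') * (of_nat (L choose n) * of_nat (k' choose n) * fact n * pochhammer ((b + 1) + of_nat n) (k' - n))" for n
      proof -
        have "b + of_nat (Suc n) = (b + 1) + of_nat n" by simp
        then show ?thesis unfolding X_def using fe[of n]
          by (simp only: diff_Suc_Suc) (simp add: algebra_simps)
      qed
      show ?thesis by (simp only: h sum_distrib_left)
    qed
    also have "\<dots> = of_nat (Suc k') * pochhammer (b + 1 + of_nat L) k'"
      using IH[where b="b+1" and k=k'] by (simp add: mult.assoc)
    finally have "(\<Sum>n\<le>Suc k'. of_nat (Suc L choose n) * X n) =
       pochhammer (b + of_nat L) (Suc k') + of_nat (Suc k') * pochhammer (b + 1 + of_nat L) k'" .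
    also have "\<dots> = pochhammer (b + of_nat (Suc L)) (Suc k')"
    proof -
      have r1: "pochhammer (b + of_nat L) (Suc k') = (b + of_nat L) * pochhammer (b + 1 + of_nat L) k'"
        by (simp add: pochhammer_rec add_ac)
      have r2: "pochhammer (b + of_nat (Suc L)) (Suc k') = pochhammer (b + 1 + of_nat L) k' * (b + 1 + of_nat L + of_nat k')"
        by (simp add: pochhammer_Suc add_ac)
      show ?thesis by (subst r1, subst r2) (simp add: algebra_simps)
    qed
    finally show ?thesis using \<open>k = Suc k'\<close> by (simp add: X_def mult.assoc)
  qed
qed


lemma aux: "(c::complex) \<noteq> 0 \<Longrightarrow> a \<noteq> 0 \<Longrightarrow> x * (a / b) * c / (d * c * a) = x / (d * b)"
  by (cases "b = 0"; cases "d = 0") (simp_all add: field_simps)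

lemma vand2:
  fixes b :: complex
  assumes nz: "pochhammer b k \<noteq> 0"
  shows "(\<Sum>n\<le>k. of_nat (L choose n) / (pochhammer b n * fact (k - n))) = pochhammer (b + of_nat L) k / (pochhammer b k * fact k)"
proof -
  have "pochhammer (b + of_nat L) k / (pochhammer b k * fact k) =
     (\<Sum>n\<le>k. of_nat (L choose n) * of_nat (k choose n) * fact n * pochhammer (b + of_nat n) (k - n) / (pochhammer b k * fact k))"
    by (subst vand[where b=b and k=k and L=L, symmetric]) (simp add: sum_divide_distrib)
  also have "\<dots> = (\<Sum>n\<le>k. of_nat (L choose n) / (pochhammer b n * fact (k - n)))"
  proof (rule sum.cong[OF refl])
    fix n assume "n \<in> {..k}"
    then have nk: "n \<le> k" by simp
    have pp: "pochhammer b k = pochhammer b n * pochhammer (b + of_nat n) (k - n)"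
      by (rule pochhammer_product[OF nk])
    with nz have n1: "pochhammer b n \<noteq> 0" and n2: "pochhammer (b + of_nat n) (k - n) \<noteq> 0" by auto
    have fb: "fact n * of_nat (k choose n) = (fact k / fact (k - n) :: complex)"
      by (rule fact_binomial[OF nk])
    show "of_nat (L choose n) * of_nat (k choose n) * fact n * pochhammer (b + of_nat n) (k - n) / (pochhammer b k * fact k)
        = of_nat (L choose n) / (pochhammer b n * fact (k - n))"
    proof -
      have "of_nat (L choose n) * of_nat (k choose n) * fact n * pochhammer (b + of_nat n) (k - n) / (pochhammer b k * fact k)
          = of_nat (L choose n) * (fact n * of_nat (k choose n)) * pochhammer (b + of_nat n) (k - n) / (pochhammer b n * pochhammer (b + of_nat n) (k - n) * fact k)"
        unfolding pp by (simp add: ac_simps)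
      also have "\<dots> = of_nat (L choose n) * (fact k / fact (k - n)) * pochhammer (b + of_nat n) (k - n) / (pochhammer b n * pochhammer (b + of_nat n) (k - n) * fact k)"
        by (simp only: fb)
      also have "\<dots> = of_nat (L choose n) / (pochhammer b n * fact (k - n))"
        using n2 by (intro aux) simp_all
      finally show ?thesis .
    qed
  qed
  finally show ?thesis ..
qed



definition hterm :: "complex \<Rightarrow> complex \<Rightarrow> complex \<Rightarrow> nat \<Rightarrow> complex" where
  "hterm p q z k = pochhammer p k / pochhammer q k * z ^ k / fact k"

lemma hterm_summable: "summable (\<lambda>k. norm (hterm p q z k))"
  unfolding hterm_def by (rule hyp_summable)

lemma norm_ge_Re: "Re c > 0 \<Longrightarrow> norm (c + of_nat j) \<ge> Re c"
  using complex_Re_le_cmod[of "c + of_nat j"] by simp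

lemma norm_div_le: "Re c > 0 \<Longrightarrow> norm (x / (c + of_nat j)) \<le> norm x / Re c"
  using norm_ge_Re[of c j] by (simp add: norm_divide frac_le)

lemma hterm_div_summable:
  assumes "Re c > 0"
  shows "summable (\<lambda>j. norm (hterm p q z j / (c + of_nat j)))"
  by (rule summable_comparison_test'[OF summable_divide[OF hterm_summable[of p q z], where c = "Re c"]])
     (use norm_div_le[OF assms] in auto)

lemma hypergeom1: "hypergeom [p] [q] z = (\<Sum>k. hterm p q z k)"
  by (simp add: hypergeom_def hterm_def)

lemma macrobert_M:
  fixes c :: complex
  assumes c: "Re c > 0" and d: "d = c + 1" and a: "a = \<alpha>"
  shows "macrobertE [a, c] [\<beta>, d] (\<i> / X) = Gamma \<alpha> / Gamma \<beta> * (\<Sum>j. hterm \<alpha> \<beta> (\<i> * X) j / (c + of_nat j))"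
proof -
  have cn: "c \<notin> \<int>\<^sub>\<le>\<^sub>0" using c by (auto elim!: nonpos_Ints_cases)
  have c0: "c \<noteq> 0" using c by auto
  have cj: "c + of_nat j \<noteq> 0" for j using c by (auto simp: complex_eq_iff)
  have pc1: "pochhammer (c + 1) j \<noteq> 0" for j
  proof
    assume "pochhammer (c + 1) j = 0"
    then obtain k where "c + 1 = - of_nat k" by (auto simp: pochhammer_eq_0_iff)
    then have "Re (c + 1) = - of_nat k" by simp
    with c show False by simp
  qed
  have pr: "pochhammer c j / pochhammer (c + 1) j = c / (c + of_nat j)" for j
  proof -
    have "pochhammer c j * (c + of_nat j) = c * pochhammer (c + 1) j"
      using pochhammer_rec[of c j] pochhammer_Suc[of c j] by simp
    then show ?thesis using pc1[of j] cj[of j] by (simp add: field_simps)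
  qed
  have g: "Gamma c / Gamma (c + 1) = 1 / c"
    using Gamma_plus1[OF cn] Gamma_eq_zero_iff[of c] cn c0 by (simp add: field_simps)
  have z: "- 1 / (\<i> / X) = \<i> * X"
    by (cases "X = 0") (simp_all add: field_simps)
  have "hypergeom [\<alpha>, c] [\<beta>, c + 1] (\<i> * X) = (\<Sum>j. c * (hterm \<alpha> \<beta> (\<i> * X) j / (c + of_nat j)))"
    unfolding hypergeom_def
  proof (rule suminf_cong)
    fix j
    have "pochhammer \<alpha> j * pochhammer c j / (pochhammer \<beta> j * pochhammer (c + 1) j) =
        pochhammer \<alpha> j / pochhammer \<beta> j * (pochhammer c j / pochhammer (c + 1) j)" by simp
    then show "(\<Prod>a\<leftarrow>[\<alpha>, c]. pochhammer a j) / (\<Prod>b\<leftarrow>[\<beta>, c + 1]. pochhammer b j) * (\<i> * X) ^ j / fact j =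
         c * (hterm \<alpha> \<beta> (\<i> * X) j / (c + of_nat j))"
      unfolding pr hterm_def by (simp add: ac_simps)
  qed
  also have "\<dots> = c * (\<Sum>j. hterm \<alpha> \<beta> (\<i> * X) j / (c + of_nat j))"
    by (rule suminf_mult[OF summable_norm_cancel[OF hterm_div_summable[OF c]]])
  finally have h: "hypergeom [\<alpha>, c] [\<beta>, c + 1] (\<i> * X) = c * (\<Sum>j. hterm \<alpha> \<beta> (\<i> * X) j / (c + of_nat j))" .
  have gc: "Gamma c \<noteq> 0" using cn by (simp add: Gamma_eq_zero_iff)
  show ?thesis
    unfolding macrobertE_def a d z h using Gamma_plus1[OF cn] c0 gc
    by (cases "Gamma \<beta> = 0") (simp_all add: field_simps)
qed


lemma hterm_scale: "hterm p q (z * y) k = hterm p q z k * y ^ k"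
  by (simp add: hterm_def power_mult_distrib)

definition dcoef :: "(nat \<Rightarrow> complex) \<Rightarrow> (nat \<Rightarrow> complex) \<Rightarrow> complex \<Rightarrow> nat \<Rightarrow> complex" where
  "dcoef a b w m = (\<Sum>i\<le>m. b i * a (m - i)) / (w + of_nat m)"

lemma GY:
  assumes w: "Re w > 0" and sa: "summable (\<lambda>j. norm (a j * y ^ j))" and sb: "summable (\<lambda>k. norm (b k * y ^ k))"
  shows "(\<lambda>m. dcoef a b w m * y ^ m) sums (\<Sum>k. \<Sum>j. b k * a j * y ^ (k + j) / (w + of_nat (k + j)))"
proof -
  have "(\<lambda>m. \<Sum>i\<le>m. b i * a (m - i) * y ^ (i + (m - i)) / (w + of_nat (i + (m - i)))) sums
        (\<Sum>k. \<Sum>j. b k * a j * y ^ (k + j) / (w + of_nat (k + j)))"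
  proof (rule double_diag[where u = "\<lambda>k. norm (b k * y ^ k)" and v = "\<lambda>j. norm (a j * y ^ j) / Re w"])
    show "summable (\<lambda>j. norm (a j * y ^ j) / Re w)" by (rule summable_divide[OF sa])
    fix k j
    have "norm (b k * a j * y ^ (k + j) / (w + of_nat (k + j))) = norm ((b k * y ^ k) * (a j * y ^ j) / (w + of_nat (k + j)))"
      by (simp add: power_add ac_simps)
    also have "\<dots> \<le> norm ((b k * y ^ k) * (a j * y ^ j)) / Re w" by (rule norm_div_le[OF w])
    finally show "norm (b k * a j * y ^ (k + j) / (w + of_nat (k + j))) \<le> norm (b k * y ^ k) * (norm (a j * y ^ j) / Re w)"
      by (simp add: norm_mult)
  qed (use sb w in auto)
  moreover have "(\<Sum>i\<le>m. b i * a (m - i) * y ^ (i + (m - i)) / (w + of_nat (i + (m - i)))) = dcoef a b w m * y ^ m" for m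
    unfolding dcoef_def by (simp add: sum_divide_distrib sum_distrib_right)
  ultimately show ?thesis by simp
qed

lemma Gderiv:
  fixes a b :: "nat \<Rightarrow> complex" and w :: complex and t :: real
  assumes w: "Re w > 0" and sa: "\<And>y. summable (\<lambda>j. norm (a j * y ^ j))" and sb: "\<And>y. summable (\<lambda>k. norm (b k * y ^ k))"
    and t: "t \<noteq> 0"
  shows "((\<lambda>t. complex_of_real t powr w * (\<Sum>m. dcoef a b w m * complex_of_real t ^ m)) has_vector_derivative
      (complex_of_real t powr (w - 1) * ((\<Sum>k. b k * complex_of_real t ^ k) * (\<Sum>j. a j * complex_of_real t ^ j)))) (at t)"
proof -
  define T where "T = complex_of_real t"
  define d where "d = dcoef a b w"
  have sd: "summable (\<lambda>m. d m * y ^ m)" for y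
    using GY[OF w sa sb] unfolding d_def by (rule sums_summable)
  have Gd: "((\<lambda>y. \<Sum>m. d m * y ^ m) has_field_derivative (\<Sum>m. diffs d m * T ^ m)) (at T)"
    by (rule termdiffs_strong_converges_everywhere[OF sd])
  have pd: "((\<lambda>t. complex_of_real t powr w) has_vector_derivative (w * T powr (w - 1))) (at t)"
    unfolding T_def by (rule powr_real_deriv[OF t])
  have der: "((\<lambda>t. complex_of_real t powr w * (\<Sum>m. d m * complex_of_real t ^ m)) has_vector_derivative
      (T powr w * (\<Sum>m. diffs d m * T ^ m) + w * T powr (w - 1) * (\<Sum>m. d m * T ^ m))) (at t)"
    using has_vector_derivative_mult[OF pd has_vector_derivative_real_field[OF Gd[unfolded T_def]]]
    unfolding T_def by simp
  have "(\<lambda>n. diffs d n * T ^ n) sums (\<Sum>m. diffs d m * T ^ m)"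
    by (rule summable_sums[OF termdiff_converges_all[OF sd]])
  then have "(\<lambda>n. T * (diffs d n * T ^ n)) sums (T * (\<Sum>m. diffs d m * T ^ m))"
    by (rule sums_mult)
  then have "(\<lambda>n. of_nat (Suc n) * d (Suc n) * T ^ Suc n) sums (T * (\<Sum>m. diffs d m * T ^ m))"
    by (simp add: diffs_def ac_simps)
  then have s1: "(\<lambda>n. of_nat n * d n * T ^ n) sums (T * (\<Sum>m. diffs d m * T ^ m))"
    by (subst (asm) sums_Suc_iff) simp
  have s2: "(\<lambda>n. w * (d n * T ^ n)) sums (w * (\<Sum>m. d m * T ^ m))"
    by (rule sums_mult[OF summable_sums[OF sd]])
  have "(\<lambda>n. of_nat n * d n * T ^ n + w * (d n * T ^ n)) sums (T * (\<Sum>m. diffs d m * T ^ m) + w * (\<Sum>m. d m * T ^ m))"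
    by (rule sums_add[OF s1 s2])
  moreover have "of_nat n * d n * T ^ n + w * (d n * T ^ n) = (\<Sum>i\<le>n. (b i * T ^ i) * (a (n - i) * T ^ (n - i)))" for n
  proof -
    have wn: "w + of_nat n \<noteq> 0" using w by (auto simp: complex_eq_iff)
    have "of_nat n * d n * T ^ n + w * (d n * T ^ n) = (w + of_nat n) * d n * T ^ n" by (simp add: algebra_simps)
    also have "\<dots> = (\<Sum>i\<le>n. b i * a (n - i)) * T ^ n" using wn by (simp add: d_def dcoef_def)
    also have "\<dots> = (\<Sum>i\<le>n. (b i * T ^ i) * (a (n - i) * T ^ (n - i)))"
    proof -
      have "(\<Sum>i\<le>n. b i * a (n - i)) * T ^ n = (\<Sum>i\<le>n. b i * a (n - i) * T ^ (i + (n - i)))"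
        by (simp add: sum_distrib_right)
      also have "\<dots> = (\<Sum>i\<le>n. (b i * T ^ i) * (a (n - i) * T ^ (n - i)))"
        by (simp only: power_add mult_ac)
      finally show ?thesis .
    qed
    finally show ?thesis .
  qed
  ultimately have "(\<lambda>n. \<Sum>i\<le>n. (b i * T ^ i) * (a (n - i) * T ^ (n - i))) sums (T * (\<Sum>m. diffs d m * T ^ m) + w * (\<Sum>m. d m * T ^ m))"
    by simp
  moreover have "(\<lambda>n. \<Sum>i\<le>n. (b i * T ^ i) * (a (n - i) * T ^ (n - i))) sums ((\<Sum>k. b k * T ^ k) * (\<Sum>j. a j * T ^ j))"
    by (rule Cauchy_product_sums[OF sb sa])
  ultimately have key: "T * (\<Sum>m. diffs d m * T ^ m) + w * (\<Sum>m. d m * T ^ m) = (\<Sum>k. b k * T ^ k) * (\<Sum>j. a j * T ^ j)"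
    using sums_unique2 by blast
  have tw: "T powr w = T powr (w - 1) * T"
    using powr_add[of T "w - 1" 1] by simp
  have "T powr w * (\<Sum>m. diffs d m * T ^ m) + w * T powr (w - 1) * (\<Sum>m. d m * T ^ m)
      = T powr (w - 1) * (T * (\<Sum>m. diffs d m * T ^ m) + w * (\<Sum>m. d m * T ^ m))"
    unfolding tw by (simp add: algebra_simps)
  also have "\<dots> = T powr (w - 1) * ((\<Sum>k. b k * T ^ k) * (\<Sum>j. a j * T ^ j))" by (simp only: key)
  finally show ?thesis using der unfolding d_def T_def by simp
qed


lemma LHS_int:
  fixes a b :: "nat \<Rightarrow> complex" and w K :: complex and g :: "real \<Rightarrow> complex"
  assumes w: "Re w > 0" and sa: "\<And>y. summable (\<lambda>j. norm (a j * y ^ j))" and sb: "\<And>y. summable (\<lambda>k. norm (b k * y ^ k))"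
    and g: "\<And>t. t \<noteq> 0 \<Longrightarrow> g t = K * (complex_of_real t powr (w - 1) * ((\<Sum>k. b k * complex_of_real t ^ k) * (\<Sum>j. a j * complex_of_real t ^ j)))"
  shows "has_oriented_integral g 0 \<rho> (K * (complex_of_real \<rho> powr w * (\<Sum>m. dcoef a b w m * complex_of_real \<rho> ^ m)))"
proof -
  define F where "F t = K * (complex_of_real t powr w * (\<Sum>m. dcoef a b w m * complex_of_real t ^ m))" for t
  have sd: "summable (\<lambda>m. dcoef a b w m * y ^ m)" for y
    using GY[OF w sa sb] by (rule sums_summable)
  have Gc: "isCont (\<lambda>t. \<Sum>m. dcoef a b w m * complex_of_real t ^ m) x" for x
  proof -
    have "((\<lambda>y. \<Sum>m. dcoef a b w m * y ^ m) has_field_derivative (\<Sum>m. diffs (dcoef a b w) m * (complex_of_real x) ^ m)) (at (complex_of_real x))"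
      by (rule termdiffs_strong_converges_everywhere[OF sd])
    from has_vector_derivative_real_field[OF this] show ?thesis
      by (rule has_vector_derivative_continuous)
  qed
  have Fc1: "isCont F x" for x
    unfolding F_def[abs_def] by (intro continuous_intros powr_real_isCont[OF w] Gc)
  have Fc: "continuous_on S F" for S
    by (rule continuous_at_imp_continuous_on) (auto intro: Fc1)
  have Fd: "(F has_vector_derivative g x) (at x)" if "x \<noteq> 0" for x
    unfolding F_def g[OF that] by (rule has_vector_derivative_mult_right[OF Gderiv[OF w sa sb that]])
  have F0: "F 0 = 0" by (simp add: F_def)
  show ?thesis
  proof (cases "0 \<le> \<rho>")
    case True
    have "(g has_integral (F \<rho> - F 0)) {0..\<rho>}"
      by (rule fundamental_theorem_of_calculus_interior[OF True Fc]) (auto intro!: Fd)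
    then show ?thesis using True F0 by (simp add: has_oriented_integral_def F_def)
  next
    case False
    have "(g has_integral (F 0 - F \<rho>)) {\<rho>..0}"
      by (rule fundamental_theorem_of_calculus_interior) (use False in \<open>auto intro!: Fd Fc\<close>)
    then show ?thesis using False F0 by (simp add: has_oriented_integral_def F_def)
  qed
qed



lemma nonpos_shift: "(z::complex) \<notin> \<int>\<^sub>\<le>\<^sub>0 \<Longrightarrow> z + of_nat k \<notin> \<int>\<^sub>\<le>\<^sub>0"
proof
  assume z: "z \<notin> \<int>\<^sub>\<le>\<^sub>0" and "z + of_nat k \<in> \<int>\<^sub>\<le>\<^sub>0"
  then obtain m where "z + of_nat k = - of_nat m" using nonpos_Ints_cases' by metis
  have "z = (z + of_nat k) - of_nat k" by simp
  also have "\<dots> = - of_nat (m + k)" by (simp only: \<open>z + of_nat k = - of_nat m\<close>) simp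
  finally have "z = - of_nat (m + k)" .
  with z show False by (metis minus_of_nat_in_nonpos_Ints)
qed

lemma gamma_shift: "(z::complex) \<notin> \<int>\<^sub>\<le>\<^sub>0 \<Longrightarrow> Gamma (z + of_nat k) = Gamma z * pochhammer z k"
  using pochhammer_Gamma[of z k] Gamma_eq_zero_iff[of z] by (simp add: field_simps)

definition ecoef :: "nat \<Rightarrow> complex \<Rightarrow> complex \<Rightarrow> complex \<Rightarrow> nat \<Rightarrow> nat \<Rightarrow> complex" where
  "ecoef L p \<beta> w n \<nu> = of_nat (L choose n) * (-\<i>) ^ (n + \<nu>) * pochhammer p (n + \<nu>) /
      (pochhammer \<beta> n * fact \<nu> * pochhammer w (n + \<nu>))"

lemma aux4:
  fixes C s t u1 u2 P1 P2 B F W1 W2 :: complex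
  assumes "s * t = u1 * u2"
  shows "C * s * (P1 * P2) / (B * F * (W1 * W2)) * t = C * u1 * P1 / (B * W1) * (P2 / W2 * u2 / F)"
proof -
  have "C * s * (P1 * P2) / (B * F * (W1 * W2)) * t = C * (s * t) * P1 * P2 * inverse B * inverse F * inverse W1 * inverse W2"
    by (simp add: divide_inverse mult_ac)
  also have "\<dots> = C * (u1 * u2) * P1 * P2 * inverse B * inverse F * inverse W1 * inverse W2"
    by (simp only: assms)
  also have "\<dots> = C * u1 * P1 / (B * W1) * (P2 / W2 * u2 / F)"
    by (simp add: divide_inverse mult_ac)
  finally show ?thesis .
qed

lemma ecoef_fact:
  "ecoef L p \<beta> w n \<nu> * X ^ (n + \<nu>) =
     (of_nat (L choose n) * (-\<i> * X) ^ n * pochhammer p n / (pochhammer \<beta> n * pochhammer w n)) *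
     hterm (p + of_nat n) (w + of_nat n) (-\<i> * X) \<nu>"
  unfolding ecoef_def hterm_def pochhammer_product'
  by (rule aux4) (simp only: power_add power_mult_distrib mult_ac)

lemma aux2: "(c::complex) \<noteq> 0 \<Longrightarrow> x * y / c * (c / (d * f)) = y / d * x / f"
  by (cases "d = 0"; cases "f = 0") (simp_all add: field_simps)

lemma aux3: "(C::complex) * x * y / (a * b * c) = x * y / c * (C / (a * b))"
  by (simp add: divide_inverse mult_ac)

lemma ecoef_sum:
  assumes w: "w = \<beta> + of_nat L" and nb: "pochhammer \<beta> k \<noteq> 0" and nw: "pochhammer w k \<noteq> 0"
  shows "(\<Sum>n\<le>L. if n \<le> k then ecoef L p \<beta> w n (k - n) else 0) = hterm p \<beta> (-\<i>) k"
proof -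
  have "(\<Sum>n\<le>L. if n \<le> k then ecoef L p \<beta> w n (k - n) else 0) = (\<Sum>n\<in>{..L} \<inter> {..k}. ecoef L p \<beta> w n (k - n))"
    by (subst sum.inter_restrict) auto
  also have "\<dots> = (\<Sum>n\<le>k. ecoef L p \<beta> w n (k - n))"
    by (rule sum.mono_neutral_left) (auto simp: ecoef_def)
  also have "\<dots> = (\<Sum>n\<le>k. (-\<i>) ^ k * pochhammer p k / pochhammer w k * (of_nat (L choose n) / (pochhammer \<beta> n * fact (k - n))))"
  proof (rule sum.cong[OF refl])
    fix n assume "n \<in> {..k}"
    then have "n + (k - n) = k" by simp
    then show "ecoef L p \<beta> w n (k - n) = (-\<i>) ^ k * pochhammer p k / pochhammer w k * (of_nat (L choose n) / (pochhammer \<beta> n * fact (k - n)))"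
      unfolding ecoef_def by (simp only:) (rule aux3)
  qed
  also have "\<dots> = (-\<i>) ^ k * pochhammer p k / pochhammer w k * (\<Sum>n\<le>k. of_nat (L choose n) / (pochhammer \<beta> n * fact (k - n)))"
    by (simp add: sum_distrib_left)
  also have "\<dots> = (-\<i>) ^ k * pochhammer p k / pochhammer w k * (pochhammer w k / (pochhammer \<beta> k * fact k))"
    unfolding vand2[OF nb] w ..
  also have "\<dots> = hterm p \<beta> (-\<i>) k"
    using nw unfolding hterm_def by (rule aux2)
  finally show ?thesis .
qed


definition Zt :: "nat \<Rightarrow> complex \<Rightarrow> complex \<Rightarrow> complex \<Rightarrow> complex \<Rightarrow> complex \<Rightarrow> nat \<Rightarrow> nat \<Rightarrow> nat \<Rightarrow> complex" where
  "Zt L p \<beta> w \<alpha> X n k j = (if n \<le> k then ecoef L p \<beta> w n (k - n) else 0) * hterm \<alpha> \<beta> \<i> j * X ^ (k + j) / (w + of_nat (k + j))"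

lemma Zt_alt: "Zt L p \<beta> w \<alpha> X n k j = ((if n \<le> k then ecoef L p \<beta> w n (k - n) else 0) * X ^ k) * (hterm \<alpha> \<beta> (\<i> * X) j / (w + of_nat (k + j)))"
  unfolding Zt_def hterm_scale by (simp add: power_add mult_ac)

lemma Zt_norm_le:
  assumes w: "Re w > 0"
  shows "norm (hterm \<alpha> \<beta> (\<i> * X) j / (w + of_nat (k + j))) \<le> norm (hterm \<alpha> \<beta> (\<i> * X) j) / Re w"
  by (rule norm_div_le[OF w])

lemma Zt_sum_j:
  assumes w: "Re w > 0"
  shows "summable (\<lambda>j. Zt L p \<beta> w \<alpha> X n k j)"
proof -
  have "summable (\<lambda>j. norm (hterm \<alpha> \<beta> (\<i> * X) j / (w + of_nat (k + j))))"
    by (rule summable_comparison_test'[OF summable_divide[OF hterm_summable[of \<alpha> \<beta> "\<i> * X"], where c = "Re w"]])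
       (use Zt_norm_le[OF w] in auto)
  then have "summable (\<lambda>j. hterm \<alpha> \<beta> (\<i> * X) j / (w + of_nat (k + j)))" by (rule summable_norm_cancel)
  then show ?thesis unfolding Zt_alt by (rule summable_mult)
qed

lemma Zt_sum_k:
  assumes w: "Re w > 0"
  shows "summable (\<lambda>k. \<Sum>j. Zt L p \<beta> w \<alpha> X n k j)"
proof -
  define V where "V = (\<Sum>j. norm (hterm \<alpha> \<beta> (\<i> * X) j) / Re w)"
  define E where "E k = (if n \<le> k then ecoef L p \<beta> w n (k - n) else 0) * X ^ k" for k
  have sV: "summable (\<lambda>j. norm (hterm \<alpha> \<beta> (\<i> * X) j) / Re w)"
    by (rule summable_divide[OF hterm_summable])
  have sn: "summable (\<lambda>j. norm (hterm \<alpha> \<beta> (\<i> * X) j / (w + of_nat (k + j))))" for k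
    by (rule summable_comparison_test'[OF sV]) (use Zt_norm_le[OF w] in auto)
  have bnd: "norm (\<Sum>j. hterm \<alpha> \<beta> (\<i> * X) j / (w + of_nat (k + j))) \<le> V" for k
  proof -
    have "norm (\<Sum>j. hterm \<alpha> \<beta> (\<i> * X) j / (w + of_nat (k + j))) \<le> (\<Sum>j. norm (hterm \<alpha> \<beta> (\<i> * X) j / (w + of_nat (k + j))))"
      by (rule summable_norm[OF sn])
    also have "\<dots> \<le> V" unfolding V_def
      by (rule suminf_le[OF _ sn sV]) (use Zt_norm_le[OF w] in auto)
    finally show ?thesis .
  qed
  have eqk: "(\<Sum>j. Zt L p \<beta> w \<alpha> X n k j) = E k * (\<Sum>j. hterm \<alpha> \<beta> (\<i> * X) j / (w + of_nat (k + j)))" for k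
    unfolding Zt_alt E_def by (rule suminf_mult[OF summable_norm_cancel[OF sn]])
  have sE: "summable (\<lambda>k. norm (E k))"
  proof -
    have "summable (\<lambda>\<nu>. norm (E (\<nu> + n)))"
    proof -
      define c where "c = of_nat (L choose n) * (-\<i> * X) ^ n * pochhammer p n / (pochhammer \<beta> n * pochhammer w n)"
      have "E (\<nu> + n) = c * hterm (p + of_nat n) (w + of_nat n) (-\<i> * X) \<nu>" for \<nu>
        using ecoef_fact[of L p \<beta> w n \<nu> X] unfolding E_def c_def by (simp add: add.commute)
      then show ?thesis
        using summable_mult[OF hterm_summable[of "p + of_nat n" "w + of_nat n" "-\<i> * X"], of "norm c"]
        by (simp add: norm_mult)
    qed
    then show ?thesis by (subst (asm) summable_iff_shift)
  qed
  show ?thesis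
    unfolding eqk
    by (rule summable_comparison_test'[OF summable_mult2[OF sE, of V]])
       (use bnd in \<open>auto simp: norm_mult intro!: mult_left_mono\<close>)
qed

lemma R2:
  assumes w: "Re w > 0" and wb: "w = \<beta> + of_nat L" and b0: "\<beta> \<notin> \<int>\<^sub>\<le>\<^sub>0"
  shows "(\<Sum>n\<le>L. \<Sum>k. \<Sum>j. Zt L p \<beta> w \<alpha> X n k j) =
         (\<Sum>k. \<Sum>j. hterm p \<beta> (-\<i>) k * hterm \<alpha> \<beta> \<i> j * X ^ (k + j) / (w + of_nat (k + j)))"
proof -
  have nb: "pochhammer \<beta> k \<noteq> 0" for k
    using b0 by (auto simp: pochhammer_eq_0_iff)
  have nw: "pochhammer w k \<noteq> 0" for k
  proof
    assume "pochhammer w k = 0"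
    then obtain m where "w = - of_nat m" by (auto simp: pochhammer_eq_0_iff)
    then have "Re w = - of_nat m" by simp
    with w show False by simp
  qed
  have "(\<Sum>n\<le>L. \<Sum>k. \<Sum>j. Zt L p \<beta> w \<alpha> X n k j) = (\<Sum>k. \<Sum>n\<le>L. \<Sum>j. Zt L p \<beta> w \<alpha> X n k j)"
    by (rule suminf_sum[symmetric]) (rule Zt_sum_k[OF w])
  also have "\<dots> = (\<Sum>k. \<Sum>j. \<Sum>n\<le>L. Zt L p \<beta> w \<alpha> X n k j)"
    by (subst suminf_sum) (auto intro: Zt_sum_j[OF w])
  also have "\<dots> = (\<Sum>k. \<Sum>j. hterm p \<beta> (-\<i>) k * hterm \<alpha> \<beta> \<i> j * X ^ (k + j) / (w + of_nat (k + j)))"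
  proof -
    have "(\<Sum>n\<le>L. Zt L p \<beta> w \<alpha> X n k j) = hterm p \<beta> (-\<i>) k * hterm \<alpha> \<beta> \<i> j * X ^ (k + j) / (w + of_nat (k + j))" for k j
    proof -
      have "(\<Sum>n\<le>L. Zt L p \<beta> w \<alpha> X n k j) = (\<Sum>n\<le>L. if n \<le> k then ecoef L p \<beta> w n (k - n) else 0) * (hterm \<alpha> \<beta> \<i> j * X ^ (k + j) / (w + of_nat (k + j)))"
        unfolding Zt_def sum_distrib_right by (simp add: mult.assoc)
      also have "\<dots> = hterm p \<beta> (-\<i>) k * (hterm \<alpha> \<beta> \<i> j * X ^ (k + j) / (w + of_nat (k + j)))"
        by (simp only: ecoef_sum[OF wb nb nw])
      finally show ?thesis by (simp add: mult.assoc)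
    qed
    then show ?thesis by simp
  qed
  finally show ?thesis .
qed



lemma aux5:
  fixes s t e x Gw Gb PB F PW C Gg PG Ga :: complex
  assumes "Gw \<noteq> 0" "Gb \<noteq> 0" "PB \<noteq> 0" "F \<noteq> 0" "PW \<noteq> 0" and st: "s * t = e * x"
  shows "(s * Gw / (Gb * PB) * C) * (t * (Gg * PG) / (F * (Gw * PW)) * (Ga / Gb)) =
         Ga / Gb * (Gg / Gb) * (C * e * PG / (PB * F * PW) * x)"
proof -
  have "(s * Gw / (Gb * PB) * C) * (t * (Gg * PG) / (F * (Gw * PW)) * (Ga / Gb)) =
        (s * t) * (C * Gg * PG * Ga) / (Gb * PB * F * PW * Gb)"
    using assms by (simp add: field_simps)
  also have "\<dots> = (e * x) * (C * Gg * PG * Ga) / (Gb * PB * F * PW * Gb)" by (simp only: st)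
  also have "\<dots> = Ga / Gb * (Gg / Gb) * (C * e * PG / (PB * F * PW) * x)"
    using assms by (simp add: field_simps)
  finally show ?thesis .
qed

lemma scal:
  fixes \<alpha> \<beta> \<gamma> w X :: complex and l n \<nu> :: nat
  assumes w: "Re w > 0" and wdef: "w = \<beta> + of_nat l + 1" and b0: "\<beta> \<notin> \<int>\<^sub>\<le>\<^sub>0" and ag: "\<alpha> + \<gamma> \<notin> \<int>\<^sub>\<le>\<^sub>0"
    and X: "X \<noteq> 0"
  shows "((-\<i> * X) ^ n * Gamma (\<beta> + of_nat l + 1) / Gamma (\<beta> + of_nat n) * of_nat ((l + 1) choose n)) *
    ((inverse (\<i> / X)) ^ \<nu> * Gamma (\<alpha> - 1 + (\<gamma> + of_nat n + 1) + of_nat \<nu>) /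
       (fact \<nu> * Gamma (\<beta> + of_nat l + of_nat n + 1 + of_nat \<nu>)) * (Gamma \<alpha> / Gamma \<beta>))
   = (Gamma \<alpha> / Gamma \<beta> * (Gamma (\<alpha> + \<gamma>) / Gamma \<beta>)) * (ecoef (l + 1) (\<alpha> + \<gamma>) \<beta> w n \<nu> * X ^ (\<nu> + n))"
proof -
  have w0: "w \<notin> \<int>\<^sub>\<le>\<^sub>0"
  proof
    assume "w \<in> \<int>\<^sub>\<le>\<^sub>0"
    then obtain m where "w = - of_nat m" using nonpos_Ints_cases' by metis
    then have "Re w = - of_nat m" by simp
    with w show False by simp
  qed
  have g1: "Gamma (\<alpha> - 1 + (\<gamma> + of_nat n + 1) + of_nat \<nu>) = Gamma (\<alpha> + \<gamma>) * pochhammer (\<alpha> + \<gamma>) (n + \<nu>)"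
  proof -
    have e: "\<alpha> - 1 + (\<gamma> + of_nat n + 1) + of_nat \<nu> = (\<alpha> + \<gamma>) + of_nat (n + \<nu>)" by simp
    show ?thesis unfolding e by (rule gamma_shift[OF ag])
  qed
  have g2: "Gamma (\<beta> + of_nat l + of_nat n + 1 + of_nat \<nu>) = Gamma w * pochhammer w (n + \<nu>)"
  proof -
    have e: "\<beta> + of_nat l + of_nat n + 1 + of_nat \<nu> = w + of_nat (n + \<nu>)" by (simp add: wdef)
    show ?thesis unfolding e by (rule gamma_shift[OF w0])
  qed
  have g3: "Gamma (\<beta> + of_nat l + 1) = Gamma w" by (simp add: wdef)
  have g4: "Gamma (\<beta> + of_nat n) = Gamma \<beta> * pochhammer \<beta> n" by (rule gamma_shift[OF b0])
  have inv: "inverse (\<i> / X) = -\<i> * X" by (simp add: field_simps)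
  have Gw: "Gamma w \<noteq> 0" using w0 by (simp add: Gamma_eq_zero_iff)
  have Gb: "Gamma \<beta> \<noteq> 0" using b0 by (simp add: Gamma_eq_zero_iff)
  have PB: "pochhammer \<beta> n \<noteq> 0" using b0 by (auto simp: pochhammer_eq_0_iff)
  have PW: "pochhammer w (n + \<nu>) \<noteq> 0" using w0 by (auto simp: pochhammer_eq_0_iff)
  have st: "(-\<i> * X) ^ n * (-\<i> * X) ^ \<nu> = (-\<i>) ^ (n + \<nu>) * X ^ (\<nu> + n)"
    by (simp only: power_add power_mult_distrib mult_ac)
  show ?thesis
    unfolding g1 g2 g3 g4 inv ecoef_def
    by (rule aux5[OF Gw Gb PB _ PW st]) simp
qed


lemma S_summable:
  assumes w: "Re w > 0"
  shows "summable (\<lambda>j. hterm \<alpha> \<beta> (\<i> * X) j / (w + of_nat (k + j)))"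
proof -
  have "summable (\<lambda>j. norm (hterm \<alpha> \<beta> (\<i> * X) j / (w + of_nat (k + j))))"
    by (rule summable_comparison_test'[OF summable_divide[OF hterm_summable[of \<alpha> \<beta> "\<i> * X"], where c = "Re w"]])
       (use Zt_norm_le[OF w] in auto)
  then show ?thesis by (rule summable_norm_cancel)
qed

lemma R1:
  fixes \<alpha> \<beta> \<gamma> w X :: complex and l n :: nat
  assumes w: "Re w > 0" and wdef: "w = \<beta> + of_nat l + 1" and b0: "\<beta> \<notin> \<int>\<^sub>\<le>\<^sub>0" and ag: "\<alpha> + \<gamma> \<notin> \<int>\<^sub>\<le>\<^sub>0"
    and X: "X \<noteq> 0" and nL: "n \<le> l + 1"
  shows "(-\<i> * X) ^ n * Gamma (\<beta> + of_nat l + 1) / Gamma (\<beta> + of_nat n) * of_nat ((l + 1) choose n)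
           * fE (\<alpha> - 1) (\<beta> + of_nat l + of_nat n + 1) (\<gamma> + of_nat n + 1) \<beta> (\<i> / X)
       = (Gamma \<alpha> / Gamma \<beta> * (Gamma (\<alpha> + \<gamma>) / Gamma \<beta>)) * (\<Sum>k. \<Sum>j. Zt (l + 1) (\<alpha> + \<gamma>) \<beta> w \<alpha> X n k j)"
proof -
  define c where "c = (-\<i> * X) ^ n * Gamma (\<beta> + of_nat l + 1) / Gamma (\<beta> + of_nat n) * of_nat ((l + 1) choose n)"
  define K where "K = Gamma \<alpha> / Gamma \<beta> * (Gamma (\<alpha> + \<gamma>) / Gamma \<beta>)"
  define g where "g k = (\<Sum>j. Zt (l + 1) (\<alpha> + \<gamma>) \<beta> w \<alpha> X n k j)" for k
  define S where "S \<nu> = (\<Sum>j. hterm \<alpha> \<beta> (\<i> * X) j / (w + of_nat (\<nu> + n + j)))" for \<nu>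
  define A where "A \<nu> = (inverse (\<i> / X)) ^ \<nu> * Gamma (\<alpha> - 1 + (\<gamma> + of_nat n + 1) + of_nat \<nu>) /
       (fact \<nu> * Gamma (\<beta> + of_nat l + of_nat n + 1 + of_nat \<nu>))" for \<nu>
  have w0: "w \<notin> \<int>\<^sub>\<le>\<^sub>0"
  proof
    assume "w \<in> \<int>\<^sub>\<le>\<^sub>0"
    then obtain m where "w = - of_nat m" using nonpos_Ints_cases' by metis
    then have "Re w = - of_nat m" by simp
    with w show False by simp
  qed
  have c0: "c \<noteq> 0"
  proof -
    have "Gamma (\<beta> + of_nat l + 1) \<noteq> 0" using w0 wdef by (simp add: Gamma_eq_zero_iff)
    moreover have "Gamma (\<beta> + of_nat n) \<noteq> 0" using nonpos_shift[OF b0, of n] by (simp add: Gamma_eq_zero_iff)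
    moreover have "((l + 1) choose n) \<noteq> 0" using nL by simp
    ultimately show ?thesis using X unfolding c_def by simp
  qed
  have M: "macrobertE [\<alpha> - 1 + 1, \<beta> + of_nat l + of_nat n + 1 + of_nat \<nu>] [\<beta>, \<beta> + of_nat l + of_nat n + 1 + 1 + of_nat \<nu>] (\<i> / X)
      = Gamma \<alpha> / Gamma \<beta> * S \<nu>" for \<nu>
  proof -
    have cw: "\<beta> + of_nat l + of_nat n + 1 + of_nat \<nu> = w + of_nat (\<nu> + n)" by (simp add: wdef)
    have Rc: "Re (w + of_nat (\<nu> + n)) > 0" using w by simp
    have mm: "macrobertE [\<alpha> - 1 + 1, w + of_nat (\<nu> + n)] [\<beta>, w + of_nat (\<nu> + n) + 1] (\<i> / X)
        = Gamma \<alpha> / Gamma \<beta> * (\<Sum>j. hterm \<alpha> \<beta> (\<i> * X) j / (w + of_nat (\<nu> + n) + of_nat j))"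
      by (rule macrobert_M[OF Rc]) simp_all
    have cw2: "\<beta> + of_nat l + of_nat n + 1 + 1 + of_nat \<nu> = w + of_nat (\<nu> + n) + 1" by (simp add: wdef)
    show ?thesis unfolding cw cw2 S_def mm by (simp add: add.assoc)
  qed
  have Qe: "g (\<nu> + n) = ecoef (l + 1) (\<alpha> + \<gamma>) \<beta> w n \<nu> * X ^ (\<nu> + n) * S \<nu>" for \<nu>
  proof -
    have "g (\<nu> + n) = (\<Sum>j. (ecoef (l + 1) (\<alpha> + \<gamma>) \<beta> w n \<nu> * X ^ (\<nu> + n)) * (hterm \<alpha> \<beta> (\<i> * X) j / (w + of_nat (\<nu> + n + j))))"
      unfolding g_def Zt_alt by simp
    also have "\<dots> = ecoef (l + 1) (\<alpha> + \<gamma>) \<beta> w n \<nu> * X ^ (\<nu> + n) * S \<nu>"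
      unfolding S_def by (rule suminf_mult[OF S_summable[OF w]])
    finally show ?thesis .
  qed
  have T: "A \<nu> * macrobertE [\<alpha> - 1 + 1, \<beta> + of_nat l + of_nat n + 1 + of_nat \<nu>] [\<beta>, \<beta> + of_nat l + of_nat n + 1 + 1 + of_nat \<nu>] (\<i> / X)
      = K / c * g (\<nu> + n)" for \<nu>
  proof -
    have sc: "c * (A \<nu> * (Gamma \<alpha> / Gamma \<beta>)) = K * (ecoef (l + 1) (\<alpha> + \<gamma>) \<beta> w n \<nu> * X ^ (\<nu> + n))"
      unfolding c_def A_def K_def by (rule scal[OF w wdef b0 ag X])
    have "A \<nu> * (Gamma \<alpha> / Gamma \<beta> * S \<nu>) = (c * (A \<nu> * (Gamma \<alpha> / Gamma \<beta>))) / c * S \<nu>"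
      using c0 by simp
    also have "\<dots> = K / c * g (\<nu> + n)" unfolding sc Qe by simp
    finally show ?thesis unfolding M .
  qed
  have sg: "summable g" unfolding g_def by (rule Zt_sum_k[OF w])
  have g0: "(\<Sum>i<n. g i) = 0"
    by (rule sum.neutral) (auto simp: g_def Zt_def)
  have "(\<lambda>\<nu>. g (\<nu> + n)) sums (suminf g)"
    using summable_sums[OF sg] by (subst sums_iff_shift) (simp add: g0)
  then have "(\<lambda>\<nu>. K / c * g (\<nu> + n)) sums (K / c * suminf g)" by (rule sums_mult)
  then have "(\<lambda>\<nu>. A \<nu> * macrobertE [\<alpha> - 1 + 1, \<beta> + of_nat l + of_nat n + 1 + of_nat \<nu>] [\<beta>, \<beta> + of_nat l + of_nat n + 1 + 1 + of_nat \<nu>] (\<i> / X))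
      sums (K / c * suminf g)" unfolding T .
  then have fE: "fE (\<alpha> - 1) (\<beta> + of_nat l + of_nat n + 1) (\<gamma> + of_nat n + 1) \<beta> (\<i> / X) = K / c * suminf g"
    unfolding fE_def A_def by (simp add: sums_iff)
  show ?thesis
    unfolding fE c_def[symmetric] K_def[symmetric] g_def[symmetric] using c0 by simp
qed

theorem mainTheorem10:
  fixes l :: nat and \<alpha> \<beta> \<gamma> :: complex and \<rho> :: real
  assumes "Re \<beta> + real l > -1"
    and "\<alpha> \<notin> \<int>\<^sub>\<le>\<^sub>0" and "\<beta> \<notin> \<int>\<^sub>\<le>\<^sub>0" and "\<alpha> + \<gamma> \<notin> \<int>\<^sub>\<le>\<^sub>0"
    and "\<rho> \<noteq> 0"
  shows "has_oriented_integral
           (\<lambda>t. complex_of_real t powr (\<beta> + of_nat l)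
                 * macrobertE [\<alpha>] [\<beta>] (\<i> / complex_of_real t)
                 * macrobertE [\<alpha> + \<gamma>] [\<beta>] (- \<i> / complex_of_real t))
           0 \<rho>
           (complex_of_real \<rho> powr (\<beta> + of_nat l + 1) *
              (\<Sum>n\<le>l + 1. (- \<i> * complex_of_real \<rho>) ^ n * Gamma (\<beta> + of_nat l + 1)
                   / Gamma (\<beta> + of_nat n) * of_nat ((l + 1) choose n)
                   * fE (\<alpha> - 1) (\<beta> + of_nat l + of_nat n + 1) (\<gamma> + of_nat n + 1) \<beta>
                        (\<i> / complex_of_real \<rho>)))"
proof -
  note rb = assms(1) and b0 = assms(3) and ag = assms(4) and r0 = assms(5)
  define w where "w = \<beta> + of_nat l + 1"
  define X where "X = complex_of_real \<rho>"
  define a where "a = hterm \<alpha> \<beta> \<i>"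
  define b where "b = hterm (\<alpha> + \<gamma>) \<beta> (-\<i>)"
  define K where "K = Gamma \<alpha> / Gamma \<beta> * (Gamma (\<alpha> + \<gamma>) / Gamma \<beta>)"
  have w: "Re w > 0" using rb by (simp add: w_def)
  have X0: "X \<noteq> 0" using r0 by (simp add: X_def)
  have sa: "summable (\<lambda>j. norm (a j * y ^ j))" for y
    unfolding a_def hterm_scale[symmetric] by (rule hterm_summable)
  have sb: "summable (\<lambda>k. norm (b k * y ^ k))" for y
    unfolding b_def hterm_scale[symmetric] by (rule hterm_summable)
  have int: "has_oriented_integral
           (\<lambda>t. complex_of_real t powr (\<beta> + of_nat l)
                 * macrobertE [\<alpha>] [\<beta>] (\<i> / complex_of_real t)
                 * macrobertE [\<alpha> + \<gamma>] [\<beta>] (- \<i> / complex_of_real t))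
           0 \<rho> (K * (complex_of_real \<rho> powr w * (\<Sum>m. dcoef a b w m * complex_of_real \<rho> ^ m)))"
  proof (rule LHS_int[OF w sa sb])
    fix t :: real assume t: "t \<noteq> 0"
    define T where "T = complex_of_real t"
    have e1: "- 1 / (\<i> / T) = \<i> * T" by (simp add: field_simps)
    have e2: "- 1 / (- \<i> / T) = -\<i> * T" by (simp add: field_simps)
    have m1: "macrobertE [\<alpha>] [\<beta>] (\<i> / T) = Gamma \<alpha> / Gamma \<beta> * (\<Sum>j. a j * T ^ j)"
      unfolding macrobertE_def e1 hypergeom1 a_def hterm_scale by simp
    have m2: "macrobertE [\<alpha> + \<gamma>] [\<beta>] (- \<i> / T) = Gamma (\<alpha> + \<gamma>) / Gamma \<beta> * (\<Sum>k. b k * T ^ k)"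
      unfolding macrobertE_def e2 hypergeom1 b_def hterm_scale by simp
    have pw: "\<beta> + of_nat l = w - 1" by (simp add: w_def)
    show "complex_of_real t powr (\<beta> + of_nat l) * macrobertE [\<alpha>] [\<beta>] (\<i> / complex_of_real t) *
          macrobertE [\<alpha> + \<gamma>] [\<beta>] (- \<i> / complex_of_real t) =
          K * (complex_of_real t powr (w - 1) * ((\<Sum>k. b k * complex_of_real t ^ k) * (\<Sum>j. a j * complex_of_real t ^ j)))"
      unfolding T_def[symmetric] m1 m2 pw K_def by (simp add: mult_ac)
  qed
  have G: "(\<Sum>m. dcoef a b w m * X ^ m) = (\<Sum>k. \<Sum>j. b k * a j * X ^ (k + j) / (w + of_nat (k + j)))"
    using GY[OF w sa sb] by (rule sums_unique[symmetric])
  also have "\<dots> = (\<Sum>n\<le>l + 1. \<Sum>k. \<Sum>j. Zt (l + 1) (\<alpha> + \<gamma>) \<beta> w \<alpha> X n k j)"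
    unfolding a_def b_def by (rule R2[symmetric, OF w _ b0]) (simp add: w_def)
  finally have G1: "K * (\<Sum>m. dcoef a b w m * X ^ m) = (\<Sum>n\<le>l + 1. K * (\<Sum>k. \<Sum>j. Zt (l + 1) (\<alpha> + \<gamma>) \<beta> w \<alpha> X n k j))"
    by (simp only: sum_distrib_left)
  also have "\<dots> = (\<Sum>n\<le>l + 1. (- \<i> * X) ^ n * Gamma (\<beta> + of_nat l + 1) / Gamma (\<beta> + of_nat n) * of_nat ((l + 1) choose n)
                   * fE (\<alpha> - 1) (\<beta> + of_nat l + of_nat n + 1) (\<gamma> + of_nat n + 1) \<beta> (\<i> / X))"
  proof (rule sum.cong[OF refl])
    fix n assume "n \<in> {..l + 1}"
    then have nL: "n \<le> l + 1" by simp
    show "K * (\<Sum>k. \<Sum>j. Zt (l + 1) (\<alpha> + \<gamma>) \<beta> w \<alpha> X n k j) = (- \<i> * X) ^ n * Gamma (\<beta> + of_nat l + 1) / Gamma (\<beta> + of_nat n) * of_nat ((l + 1) choose n)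
                   * fE (\<alpha> - 1) (\<beta> + of_nat l + of_nat n + 1) (\<gamma> + of_nat n + 1) \<beta> (\<i> / X)"
      unfolding K_def by (rule R1[OF w w_def b0 ag X0 nL, symmetric])
  qed
  finally have G2: "K * (\<Sum>m. dcoef a b w m * X ^ m) =
     (\<Sum>n\<le>l + 1. (- \<i> * X) ^ n * Gamma (\<beta> + of_nat l + 1) / Gamma (\<beta> + of_nat n) * of_nat ((l + 1) choose n)
                   * fE (\<alpha> - 1) (\<beta> + of_nat l + of_nat n + 1) (\<gamma> + of_nat n + 1) \<beta> (\<i> / X))" .
  have E: "complex_of_real \<rho> powr w *
              (\<Sum>n\<le>l + 1. (- \<i> * complex_of_real \<rho>) ^ n * Gamma (\<beta> + of_nat l + 1)
                   / Gamma (\<beta> + of_nat n) * of_nat ((l + 1) choose n)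
                   * fE (\<alpha> - 1) (\<beta> + of_nat l + of_nat n + 1) (\<gamma> + of_nat n + 1) \<beta>
                        (\<i> / complex_of_real \<rho>)) = K * (complex_of_real \<rho> powr w * (\<Sum>m. dcoef a b w m * complex_of_real \<rho> ^ m))"
    unfolding G2[unfolded X_def, symmetric] by (rule mult.left_commute)
  show ?thesis using int unfolding E[symmetric] unfolding w_def .
qed


end
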